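(* Let $L$ be a Lie algebra over a field $F$ generated by elements $a_1,\dots,a_m$ such that every element of the Lie set $S\langle a_1,\dots,a_m\rangle$ is ad-nilpotent. Let $I$ be an ideal of $L$ of finite codimension. Then $I$ is finitely generated as a Lie algebra.
   Context: An element $a\in L$ is ad-nilpotent if $\operatorname{ad}(a):x\mapsto[x,a]$ is a nilpotent operator on $L$. $S\langle a_1,\dots,a_m\rangle$ is the smallest subset of $L$ containing $a_1,\dots,a_m$ and closed under the bracket, i.e. the set of the $a_i$ and all iterated commutators in them. *)

theory Defs
  imports Main "HOL.Vector_Spaces"
begin

text \<open>A Lie algebra over a field: the whole type 'a is the underlying vector space
(with scalar multiplication scale over the field 'f) and br is the Lie bracket.\<close>

locale lie_algebra = vector_space scale
  for scale :: "'f::field \<Rightarrow> 'a::ab_group_add \<Rightarrow> 'a" +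
  fixes br :: "'a \<Rightarrow> 'a \<Rightarrow> 'a"
  assumes br_add_left: "br (x + y) z = br x z + br y z"
    and br_add_right: "br x (y + z) = br x y + br x z"
    and br_scale_left: "br (scale c x) y = scale c (br x y)"
    and br_scale_right: "br x (scale c y) = scale c (br x y)"
    and br_alt: "br x x = 0"
    and jacobi: "br x (br y z) + br y (br z x) + br z (br x y) = 0"

definition ad_nilpotent :: "('a \<Rightarrow> 'a \<Rightarrow> 'a) \<Rightarrow> 'a::zero \<Rightarrow> bool" where
  "ad_nilpotent br a \<longleftrightarrow> (\<exists>n. \<forall>x. ((\<lambda>y. br y a) ^^ n) x = 0)"

inductive_set lie_set :: "('a \<Rightarrow> 'a \<Rightarrow> 'a) \<Rightarrow> 'a set \<Rightarrow> 'a set"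
  for br :: "'a \<Rightarrow> 'a \<Rightarrow> 'a" and A :: "'a set" where
  gen: "a \<in> A \<Longrightarrow> a \<in> lie_set br A"
| brk: "x \<in> lie_set br A \<Longrightarrow> y \<in> lie_set br A \<Longrightarrow> br x y \<in> lie_set br A"

definition lie_subalg :: "('f::field \<Rightarrow> 'a::ab_group_add \<Rightarrow> 'a) \<Rightarrow> ('a \<Rightarrow> 'a \<Rightarrow> 'a) \<Rightarrow> 'a set \<Rightarrow> 'a set" where
  "lie_subalg scale br A =
     \<Inter>{S. A \<subseteq> S \<and> module.subspace scale S \<and> (\<forall>x\<in>S. \<forall>y\<in>S. br x y \<in> S)}"

definition lie_ideal :: "('f::field \<Rightarrow> 'a::ab_group_add \<Rightarrow> 'a) \<Rightarrow> ('a \<Rightarrow> 'a \<Rightarrow> 'a) \<Rightarrow> 'a set \<Rightarrow> bool" where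
  "lie_ideal scale br I \<longleftrightarrow> module.subspace scale I \<and> (\<forall>x\<in>I. \<forall>a. br x a \<in> I)"

text \<open>I has finite codimension: L/I is finite dimensional, i.e. finitely many
vectors together with I span L.\<close>
definition finite_codim :: "('f::field \<Rightarrow> 'a::ab_group_add \<Rightarrow> 'a) \<Rightarrow> 'a set \<Rightarrow> bool" where
  "finite_codim scale I \<longleftrightarrow> (\<exists>B. finite B \<and> module.span scale (I \<union> B) = UNIV)"

end

theory Submission
  imports Defs
begin

lemma ag_aux: "(Z::'b::ab_group_add) + P + Q = 0 \<Longrightarrow> P = p \<Longrightarrow> Q = -q \<Longrightarrow> q - p = Z"
proof -
  assume "Z + P + Q = 0" "P = p" "Q = -q"
  then have "Z + p + - q = 0" by simp
  then show ?thesis by (simp add: algebra_simps)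
qed

context lie_algebra begin

lemma br_zero_left[simp]: "br 0 y = 0"
  using br_scale_left[of 0 0 y] by simp
lemma br_zero_right[simp]: "br y 0 = 0"
  using br_scale_right[of y 0 0] by simp
lemma br_neg_left: "br (- x) y = - br x y"
proof -
  have "br (- x) y + br x y = 0" by (simp add: br_add_left[symmetric])
  then show ?thesis by (simp add: eq_neg_iff_add_eq_0)
qed
lemma br_diff_left: "br (x - y) z = br x z - br y z"
  using br_add_left[of x "- y" z] br_neg_left[of y z] by simp
lemma br_anti: "br x y = - br y x"
proof -
  have "0 = br (x+y) (x+y)" by (simp add: br_alt)
  also have "\<dots> = br x y + br y x" unfolding br_add_left br_add_right by (simp add: br_alt)
  finally have "0 = br x y + br y x" .
  then have "br x y + br y x = 0" by simp
  then show ?thesis by (simp add: eq_neg_iff_add_eq_0)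
qed
lemma br_swap: "br (br z a) b - br (br z b) a = br z (br a b)"
proof -
  have j: "br z (br a b) + br a (br b z) + br b (br z a) = 0" by (rule jacobi)
  have "br a (br b z) = br (br z b) a" using br_anti[of a "br b z"] br_anti[of b z]
    by (simp add: br_neg_left)
  moreover have "br b (br z a) = - br (br z a) b" by (rule br_anti)
  ultimately show ?thesis using ag_aux[OF j] by simp
qed
lemma br_deriv: "br (br z1 z2) s = br (br z1 s) z2 + br z1 (br z2 s)"
proof -
  have j: "br z1 (br z2 s) + br z2 (br s z1) + br s (br z1 z2) = 0" by (rule jacobi)
  have "br s (br z1 z2) = - br (br z1 z2) s" by (rule br_anti)
  moreover have "br z2 (br s z1) = br (br z1 s) z2" using br_anti[of z2 "br s z1"] br_anti[of s z1]
    by (simp add: br_neg_left)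
  ultimately have "br (br z1 z2) s - br (br z1 s) z2 = br z1 (br z2 s)" using ag_aux[OF j] by simp
  then show ?thesis by (simp add: algebra_simps)
qed

lemma subspace_vimage_left: "subspace V \<Longrightarrow> subspace {x. br x b \<in> V}"
  unfolding subspace_def by (simp add: br_add_left br_scale_left)
lemma subspace_vimage_right: "subspace V \<Longrightarrow> subspace {x. br b x \<in> V}"
  unfolding subspace_def by (simp add: br_add_right br_scale_right)

lemma br_span:
  assumes V: "subspace V" and h: "\<And>a b. a\<in>P \<Longrightarrow> b\<in>Q \<Longrightarrow> br a b \<in> V"
    and x: "x \<in> span P" and y: "y \<in> span Q"
  shows "br x y \<in> V"
proof -
  have 1: "br x b \<in> V" if "b \<in> Q" for b
    using span_minimal[of P "{x. br x b \<in> V}"] subspace_vimage_left[OF V, of b] h that x by blast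
  show ?thesis
    using span_minimal[of Q "{y. br x y \<in> V}"] subspace_vimage_right[OF V, of x] 1 y by blast
qed

lemma span_finite_sub: "x \<in> span S \<Longrightarrow> \<exists>t. finite t \<and> t \<subseteq> S \<and> x \<in> span t"
proof (induct rule: span_induct_alt)
  case base then show ?case by (auto intro: span_zero)
next
  case (step c x y)
  then obtain t where t: "finite t" "t \<subseteq> S" "y \<in> span t" by blast
  have "scale c x + y \<in> span (insert x t)"
    by (rule span_add[OF span_scale[OF span_base[OF insertI1]] subsetD[OF span_mono[OF subset_insertI] t(3)]])
  moreover have "finite (insert x t)" using t(1) by simp
  moreover have "insert x t \<subseteq> S" using t(2) step(1) by simp
  ultimately show ?case by blast
qed

definition act :: "'a \<Rightarrow> 'a list \<Rightarrow> 'a" where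
  "act z w = foldl br z w"

lemma act_simps[simp]: "act z [] = z" "act z (s#w) = act (br z s) w"
  "act z (u @ v) = act (act z u) v"
  by (simp_all add: act_def)

lemma act_add: "act (z1 + z2) v = act z1 v + act z2 v"
  by (induct v arbitrary: z1 z2) (simp_all add: br_add_left)
lemma act_scale: "act (scale c z) v = scale c (act z v)"
  by (induct v arbitrary: z) (simp_all add: br_scale_left)
lemma act_zero[simp]: "act 0 v = 0"
  by (induct v) simp_all
lemma act_diff: "act (z1 - z2) v = act z1 v - act z2 v"
  by (induct v arbitrary: z1 z2) (simp_all add: br_diff_left)
lemma act_rep: "act z (replicate n s) = ((\<lambda>y. br y s) ^^ n) z"
  by (induct n arbitrary: z) (simp_all add: funpow_Suc_right del: funpow.simps)

definition subalg :: "'a set \<Rightarrow> bool" where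
  "subalg S \<longleftrightarrow> subspace S \<and> (\<forall>x\<in>S. \<forall>y\<in>S. br x y \<in> S)"

lemma lie_subalg_least: "G \<subseteq> S \<Longrightarrow> subalg S \<Longrightarrow> lie_subalg scale br G \<subseteq> S"
  unfolding lie_subalg_def subalg_def by blast

lemma lie_subalg_sub: "G \<subseteq> lie_subalg scale br G"
  unfolding lie_subalg_def by blast

lemma lie_subalg_subalg: "subalg (lie_subalg scale br G)"
  unfolding subalg_def lie_subalg_def subspace_def by blast

lemma lie_subalg_mono: "G \<subseteq> H \<Longrightarrow> lie_subalg scale br G \<subseteq> lie_subalg scale br H"
  unfolding lie_subalg_def by blast


end

context lie_algebra begin
lemma subalg_subspace: "subalg M \<Longrightarrow> subspace M"
  unfolding subalg_def by blast
lemma subalg_br: "subalg M \<Longrightarrow> x \<in> M \<Longrightarrow> y \<in> M \<Longrightarrow> br x y \<in> M"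
  unfolding subalg_def by blast

lemma leib:
  assumes M: "subalg M"
  shows "(\<forall>v1. set v1 \<subseteq> set v \<and> length v1 \<le> length v \<longrightarrow> act z1 v1 \<in> M) \<Longrightarrow>
         (\<forall>v1. set v1 \<subseteq> set v \<and> length v1 \<le> length v \<longrightarrow> act z2 v1 \<in> M) \<Longrightarrow>
         act (br z1 z2) v \<in> M"
proof (induct v arbitrary: z1 z2)
  case Nil
  have "z1 \<in> M" "z2 \<in> M" using Nil.prems(1)[rule_format, of "[]"] Nil.prems(2)[rule_format, of "[]"] by simp_all
  then show ?case using subalg_br[OF M, of z1 z2] by simp
next
  case (Cons s v)
  have e: "act (br z1 z2) (s#v) = act (br (br z1 s) z2) v + act (br z1 (br z2 s)) v"
    by (simp only: act_simps(2) br_deriv[of z1 z2 s] act_add)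
  have a: "act (br (br z1 s) z2) v \<in> M"
  proof (rule Cons.hyps)
    show "\<forall>v1. set v1 \<subseteq> set v \<and> length v1 \<le> length v \<longrightarrow> act (br z1 s) v1 \<in> M"
    proof (intro allI impI)
      fix v1 assume "set v1 \<subseteq> set v \<and> length v1 \<le> length v"
      then have "set (s#v1) \<subseteq> set (s#v) \<and> length (s#v1) \<le> length (s#v)" by auto
      then show "act (br z1 s) v1 \<in> M" using Cons.prems(1)[rule_format, of "s#v1"] by simp
    qed
    show "\<forall>v1. set v1 \<subseteq> set v \<and> length v1 \<le> length v \<longrightarrow> act z2 v1 \<in> M"
    proof (intro allI impI)
      fix v1 assume "set v1 \<subseteq> set v \<and> length v1 \<le> length v"
      then show "act z2 v1 \<in> M" using Cons.prems(2)[rule_format, of v1] by auto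
    qed
  qed
  have b: "act (br z1 (br z2 s)) v \<in> M"
  proof (rule Cons.hyps)
    show "\<forall>v1. set v1 \<subseteq> set v \<and> length v1 \<le> length v \<longrightarrow> act (br z2 s) v1 \<in> M"
    proof (intro allI impI)
      fix v1 assume "set v1 \<subseteq> set v \<and> length v1 \<le> length v"
      then have "set (s#v1) \<subseteq> set (s#v) \<and> length (s#v1) \<le> length (s#v)" by auto
      then show "act (br z2 s) v1 \<in> M" using Cons.prems(2)[rule_format, of "s#v1"] by simp
    qed
    show "\<forall>v1. set v1 \<subseteq> set v \<and> length v1 \<le> length v \<longrightarrow> act z1 v1 \<in> M"
    proof (intro allI impI)
      fix v1 assume "set v1 \<subseteq> set v \<and> length v1 \<le> length v"
      then show "act z1 v1 \<in> M" using Cons.prems(1)[rule_format, of v1] by auto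
    qed
  qed
  show ?case using e a b subspace_add[OF subalg_subspace[OF M]] by simp
qed

lemma main:
  assumes M: "subalg M" and Bfin: "finite B"
    and nil: "\<And>s z. s \<in> B \<Longrightarrow> ((\<lambda>y. br y s) ^^ nn s) z = 0"
    and dec: "\<And>a b. a \<in> B \<Longrightarrow> b \<in> B \<Longrightarrow> \<exists>p\<in>X. br a b - p \<in> span B"
    and short: "\<And>x w. x \<in> X \<Longrightarrow> set w \<subseteq> B \<Longrightarrow> length w \<le> sum nn B \<Longrightarrow> act x w \<in> M"
  shows "x \<in> X \<Longrightarrow> set w \<subseteq> B \<Longrightarrow> act x w \<in> M"
proof (induct "length w" arbitrary: x w rule: less_induct)
  case less
  note IH = less.hyps
  have MS: "subspace M" using subalg_subspace[OF M] .
  show ?case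
  proof (cases "length w \<le> sum nn B")
    case True then show ?thesis using short less.prems by blast
  next
    case False
    have swap: "act x (u@a#b#v) - act x (u@b#a#v) \<in> M"
      if x: "x \<in> X" and sb: "set (u@a#b#v) \<subseteq> B" and len: "length (u@a#b#v) = length w" for x u a b v
    proof -
      define z where "z = act x u"
      have "act x (u@a#b#v) - act x (u@b#a#v) = act (br (br z a) b - br (br z b) a) v"
        by (simp add: z_def act_diff)
      also have "\<dots> = act (br z (br a b)) v" by (simp add: br_swap)
      finally have e1: "act x (u@a#b#v) - act x (u@b#a#v) = act (br z (br a b)) v" .
      have ab: "a \<in> B" "b \<in> B" using sb by auto
      obtain p where p: "p \<in> X" "br a b - p \<in> span B" using dec[OF ab] by blast
      define q where "q = br a b - p"
      have "act (br z (br a b)) v = act (br z p) v + act (br z q) v"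
        by (simp add: q_def act_add[symmetric] br_add_right[symmetric])
      moreover have "act (br z p) v \<in> M"
      proof (rule leib[OF M])
        show "\<forall>v1. set v1 \<subseteq> set v \<and> length v1 \<le> length v \<longrightarrow> act z v1 \<in> M"
        proof (intro allI impI)
          fix v1 assume h: "set v1 \<subseteq> set v \<and> length v1 \<le> length v"
          have "act x (u @ v1) \<in> M"
            using IH[of "u @ v1" x] h len sb x by auto
          then show "act z v1 \<in> M" by (simp add: z_def)
        qed
        show "\<forall>v1. set v1 \<subseteq> set v \<and> length v1 \<le> length v \<longrightarrow> act p v1 \<in> M"
        proof (intro allI impI)
          fix v1 assume h: "set v1 \<subseteq> set v \<and> length v1 \<le> length v"
          then show "act p v1 \<in> M"
            using IH[of v1 p] len sb p(1) by auto
        qed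
      qed
      moreover have "act (br z q) v \<in> M"
      proof -
        have sub: "subspace {q. act (br z q) v \<in> M}"
          using MS unfolding subspace_def by (simp add: br_add_right br_scale_right act_add act_scale)
        have "B \<subseteq> {q. act (br z q) v \<in> M}"
        proof
          fix s assume s: "s \<in> B"
          have "act x (u @ s # v) \<in> M" using IH[of "u @ s # v" x] s len sb x by auto
          then show "s \<in> {q. act (br z q) v \<in> M}" by (simp add: z_def)
        qed
        then show ?thesis using span_minimal[OF _ sub] p(2) q_def by blast
      qed
      ultimately show ?thesis using e1 subspace_add[OF MS] by simp
    qed
    have moveend: "\<And>u x. x \<in> X \<Longrightarrow> set (u@a#v) \<subseteq> B \<Longrightarrow> length (u@a#v) = length w \<Longrightarrow>
        act x (u@a#v) - act x (u@v@[a]) \<in> M" for a v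
    proof (induct v)
      case Nil then show ?case using subspace_0[OF MS] by simp
    next
      case (Cons b v u x)
      have 1: "act x (u@a#b#v) - act x (u@b#a#v) \<in> M" using swap Cons.prems by blast
      have 2: "act x ((u@[b])@a#v) - act x ((u@[b])@v@[a]) \<in> M"
        using Cons.hyps[of x "u@[b]"] Cons.prems by auto
      have "act x (u@a#b#v) - act x (u@(b#v)@[a]) =
         (act x (u@a#b#v) - act x (u@b#a#v)) + (act x ((u@[b])@a#v) - act x ((u@[b])@v@[a]))"
        by simp
      then show ?case using subspace_add[OF MS 1 2] by simp
    qed
    have gather: "\<exists>w'. set w' \<subseteq> B \<and> length w' + c = length w \<and> count_list w' s + c = count_list w s
        \<and> act x w - act x (w' @ replicate c s) \<in> M"
      if s: "s \<in> B" and c: "c \<le> count_list w s" for s c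
      using c
    proof (induct c)
      case 0 then show ?case using less.prems subspace_0[OF MS] by (intro exI[of _ w]) auto
    next
      case (Suc c)
      then obtain w' where w': "set w' \<subseteq> B" "length w' + c = length w" "count_list w' s + c = count_list w s"
        "act x w - act x (w' @ replicate c s) \<in> M" by auto
      have "count_list w' s \<noteq> 0" using w'(3) Suc.prems by simp
      then have "s \<in> set w'" using count_notin by metis
      then obtain u v where uv: "w' = u @ s # v" using split_list by metis
      have m: "act x (u @ s # (v @ replicate c s)) - act x (u @ (v @ replicate c s) @ [s]) \<in> M"
      proof -
        have r: "set (replicate c s) \<subseteq> B" using s by (induct c) auto
        show ?thesis using moveend[of x u s "v @ replicate c s"] less.prems w' uv s r by auto
      qed
      have eq: "u @ (v @ replicate c s) @ [s] = (u @ v) @ replicate (Suc c) s"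
        by (simp add: replicate_append_same)
      have eqA: "act x w - act x ((u @ v) @ replicate (Suc c) s) =
          (act x w - act x (w' @ replicate c s)) + (act x (u @ s # (v @ replicate c s)) - act x (u @ (v @ replicate c s) @ [s]))"
        using uv eq by simp
      have "act x w - act x ((u @ v) @ replicate (Suc c) s) \<in> M"
        unfolding eqA by (rule subspace_add[OF MS w'(4) m])
      moreover have "set (u @ v) \<subseteq> B" using w'(1) uv by auto
      moreover have "length (u @ v) + Suc c = length w" using w'(2) uv by simp
      moreover have "count_list (u @ v) s + Suc c = count_list w s" using w'(3) uv by simp
      ultimately show ?case by blast
    qed
    obtain s where s: "s \<in> B" "nn s \<le> count_list w s"
    proof (rule ccontr)
      assume "\<not> thesis"
      then have "\<forall>s\<in>B. count_list w s \<le> nn s" using that by force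
      then have "sum (count_list w) B \<le> sum nn B" by (intro sum_mono) auto
      moreover have "sum (count_list w) B = length w" using sum_count_set[OF less.prems(2) Bfin] .
      ultimately show False using False by simp
    qed
    obtain w' where "act x w - act x (w' @ replicate (nn s) s) \<in> M"
      using gather[OF s] by blast
    moreover have "act x (w' @ replicate (nn s) s) = 0" using nil[OF s(1)] by (simp add: act_rep)
    ultimately show ?thesis by simp
  qed
qed


lemma span_lie_set: "lie_subalg scale br A \<subseteq> span (lie_set br A)"
proof (rule lie_subalg_least)
  show "A \<subseteq> span (lie_set br A)"
  proof
    fix a assume a: "a \<in> A"
    show "a \<in> span (lie_set br A)" by (rule span_base[OF lie_set.gen[OF a]])
  qed
  show "subalg (span (lie_set br A))"
    unfolding subalg_def
  proof (intro conjI ballI)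
    fix x y assume xy: "x \<in> span (lie_set br A)" "y \<in> span (lie_set br A)"
    have h: "\<And>a b. a \<in> lie_set br A \<Longrightarrow> b \<in> lie_set br A \<Longrightarrow> br a b \<in> span (lie_set br A)"
      by (rule span_base, rule lie_set.brk)
    show "br x y \<in> span (lie_set br A)" by (rule br_span[OF subspace_span h xy])
  qed simp
qed

lemma act_ideal: "lie_ideal scale br I \<Longrightarrow> x \<in> I \<Longrightarrow> act x w \<in> I"
  unfolding lie_ideal_def by (induct w arbitrary: x) auto

lemma final:
  assumes "finite A"
    and LA: "lie_subalg scale br A = UNIV"
    and nilA: "\<forall>s \<in> lie_set br A. ad_nilpotent br s"
    and ideal: "lie_ideal scale br I"
    and codim: "finite_codim scale I"
  shows "\<exists>G. finite G \<and> G \<subseteq> I \<and> lie_subalg scale br G = I"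
proof -
  have IS: "subspace I" using ideal unfolding lie_ideal_def by blast
  have Isub: "subalg I" using ideal unfolding lie_ideal_def subalg_def by blast
  have spanS: "span (lie_set br A) = UNIV" using span_lie_set[of A] LA by blast
  obtain B0 where B0: "finite B0" "span (I \<union> B0) = UNIV"
    using codim unfolding finite_codim_def by blast
  have "\<forall>b\<in>B0. \<exists>t. finite t \<and> t \<subseteq> lie_set br A \<and> b \<in> span t"
    using span_finite_sub spanS by blast
  then obtain T where T: "\<And>b. b \<in> B0 \<Longrightarrow> finite (T b) \<and> T b \<subseteq> lie_set br A \<and> b \<in> span (T b)"
    by metis
  define B where "B = \<Union>(T ` B0)"
  have Bfin: "finite B" unfolding B_def using B0(1) T by blast
  have BS: "B \<subseteq> lie_set br A" unfolding B_def using T by blast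
  have "B0 \<subseteq> span B"
  proof
    fix b assume b: "b \<in> B0"
    then have "T b \<subseteq> B" unfolding B_def by blast
    then show "b \<in> span B" using T[OF b] span_mono by blast
  qed
  then have "I \<union> B0 \<subseteq> span (I \<union> B)"
    using span_mono[of B "I \<union> B"] span_superset[of "I \<union> B"] by blast
  then have spIB: "span (I \<union> B) = UNIV"
    using span_minimal[of "I \<union> B0" "span (I \<union> B)"] B0(2) by auto
  have decomp: "\<exists>i. i \<in> I \<and> v - i \<in> span B" for v
  proof -
    have "v \<in> span (I \<union> B)" using spIB by simp
    then obtain x y where "v = x + y" "x \<in> span I" "y \<in> span B" unfolding span_Un by blast
    moreover have "span I = I" using IS by simp
    ultimately show ?thesis by (intro exI[of _ x]) auto
  qed
  define p where "p v = (SOME i. i \<in> I \<and> v - i \<in> span B)" for v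
  have p: "p v \<in> I" "v - p v \<in> span B" for v
    using someI_ex[OF decomp[of v]] unfolding p_def by auto
  define nn where "nn s = (SOME n. \<forall>x. ((\<lambda>y. br y s) ^^ n) x = 0)" for s
  have nil: "((\<lambda>y. br y s) ^^ nn s) z = 0" if "s \<in> B" for s z
  proof -
    have "ad_nilpotent br s" using nilA BS that by blast
    then have "\<exists>n. \<forall>x. ((\<lambda>y. br y s) ^^ n) x = 0" unfolding ad_nilpotent_def .
    from someI_ex[OF this] show ?thesis unfolding nn_def by blast
  qed
  define X where "X = p ` (A \<union> (\<lambda>(a,b). br a b) ` (B \<times> B))"
  have Xfin: "finite X" unfolding X_def using \<open>finite A\<close> Bfin by auto
  have XI: "X \<subseteq> I" unfolding X_def using p by auto
  have dec: "\<exists>q\<in>X. br a b - q \<in> span B" if "a \<in> B" "b \<in> B" for a b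
  proof -
    have "p (br a b) \<in> X" unfolding X_def using that by force
    then show ?thesis using p(2) by blast
  qed
  define N where "N = sum nn B"
  define Y where "Y = (\<lambda>(x,w). act x w) ` (X \<times> {w. set w \<subseteq> B \<and> length w \<le> N})"
  have Yfin: "finite Y" unfolding Y_def using Xfin finite_lists_length_le[OF Bfin, of N] by auto
  define M where "M = lie_subalg scale br Y"
  have Msub: "subalg M" unfolding M_def by (rule lie_subalg_subalg)
  have MS: "subspace M" using subalg_subspace[OF Msub] .
  have short: "act x w \<in> M" if "x \<in> X" "set w \<subseteq> B" "length w \<le> sum nn B" for x w
  proof -
    have "act x w \<in> Y" unfolding Y_def N_def using that by force
    then show ?thesis unfolding M_def using lie_subalg_sub by blast
  qed
  have allw: "act x w \<in> M" if "x \<in> X" "set w \<subseteq> B" for x w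
    using main[OF Msub Bfin nil dec short] that by blast
  have XM: "X \<subseteq> M" using allw[of _ "[]"] by auto
  have adB: "br z s \<in> M" if "z \<in> M" "s \<in> B" for z s
  proof -
    have "M \<subseteq> {z \<in> M. br z s \<in> M}"
      unfolding M_def
    proof (rule lie_subalg_least)
      show "Y \<subseteq> {z \<in> lie_subalg scale br Y. br z s \<in> lie_subalg scale br Y}"
      proof
        fix y assume "y \<in> Y"
        then obtain pr where pr: "pr \<in> X \<times> {w. set w \<subseteq> B \<and> length w \<le> N}" "y = (\<lambda>(x,w). act x w) pr"
          unfolding Y_def by (rule imageE)
        obtain x w where "pr = (x, w)" by (cases pr)
        then have xw: "x \<in> X" "set w \<subseteq> B" "length w \<le> N" "y = act x w" using pr by auto
        have "set (w @ [s]) \<subseteq> B" using xw(2) that(2) by simp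
        then have "act x (w @ [s]) \<in> M" using allw[OF xw(1)] by blast
        then have "br y s \<in> M" using xw by simp
        moreover have "y \<in> M" using allw xw by auto
        ultimately show "y \<in> {z \<in> lie_subalg scale br Y. br z s \<in> lie_subalg scale br Y}"
          unfolding M_def by blast
      qed
      show "subalg {z \<in> lie_subalg scale br Y. br z s \<in> lie_subalg scale br Y}"
        unfolding subalg_def
      proof (intro conjI ballI)
        show "subspace {z \<in> lie_subalg scale br Y. br z s \<in> lie_subalg scale br Y}"
          using MS unfolding M_def subspace_def by (simp add: br_add_left br_scale_left)
        fix x y assume "x \<in> {z \<in> lie_subalg scale br Y. br z s \<in> lie_subalg scale br Y}"
          "y \<in> {z \<in> lie_subalg scale br Y. br z s \<in> lie_subalg scale br Y}"
        then have h: "x \<in> M" "y \<in> M" "br x s \<in> M" "br y s \<in> M" unfolding M_def by auto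
        have "br (br x y) s \<in> M" unfolding br_deriv[of x y s]
          using subspace_add[OF MS subalg_br[OF Msub h(3) h(2)] subalg_br[OF Msub h(1) h(4)]] .
        then show "br x y \<in> {z \<in> lie_subalg scale br Y. br z s \<in> lie_subalg scale br Y}"
          using subalg_br[OF Msub h(1) h(2)] unfolding M_def by blast
      qed
    qed
    then show ?thesis using that by blast
  qed
  have adspan: "br z q \<in> M" if "z \<in> M" "q \<in> span B" for z q
    using span_minimal[OF _ subspace_vimage_right[OF MS, of z]] adB[OF that(1)] that(2) by blast
  define V where "V = {m + q | m q. m \<in> M \<and> q \<in> span B}"
  have VS: "subspace V" unfolding V_def by (rule subspace_sums[OF MS subspace_span])
  have inV: "v \<in> V" for v
  proof -
    have "lie_subalg scale br A \<subseteq> V"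
    proof (rule lie_subalg_least)
      show "A \<subseteq> V"
      proof
        fix a assume a: "a \<in> A"
        have "p a \<in> M" using XM a unfolding X_def by blast
        then show "a \<in> V" unfolding V_def using p(2)[of a] by (intro CollectI exI[of _ "p a"] exI[of _ "a - p a"]) auto
      qed
      have BB: "br a b \<in> V" if "a \<in> B" "b \<in> B" for a b
      proof -
        have "p (br a b) \<in> X" unfolding X_def using that by force
        then have "p (br a b) \<in> M" using XM by blast
        then show ?thesis unfolding V_def using p(2)[of "br a b"]
          by (intro CollectI exI[of _ "p (br a b)"] exI[of _ "br a b - p (br a b)"]) auto
      qed
      show "subalg V"
        unfolding subalg_def
      proof (intro conjI ballI)
        show "subspace V" by (rule VS)
        fix x y assume "x \<in> V" "y \<in> V"
        then obtain m1 q1 m2 q2 where mq: "x = m1 + q1" "y = m2 + q2" "m1 \<in> M" "m2 \<in> M"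
          "q1 \<in> span B" "q2 \<in> span B" unfolding V_def by blast
        have e: "br x y = br m1 m2 + br m1 q2 + - br m2 q1 + br q1 q2"
          unfolding mq br_add_left br_add_right using br_anti[of q1 m2] by (simp add: algebra_simps)
        have "br m1 m2 + br m1 q2 + - br m2 q1 \<in> M"
          by (intro subspace_add[OF MS] subspace_neg[OF MS] subalg_br[OF Msub] adspan mq)
        then have "br m1 m2 + br m1 q2 + - br m2 q1 \<in> V" unfolding V_def
          by (intro CollectI exI[of _ "br m1 m2 + br m1 q2 + - br m2 q1"] exI[of _ 0]) (auto intro: span_zero)
        moreover have "br q1 q2 \<in> V" using br_span[OF VS BB mq(5) mq(6)] .
        ultimately show "br x y \<in> V" unfolding e by (rule subspace_add[OF VS])
      qed
    qed
    then show ?thesis using LA by blast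
  qed
  have MI: "M \<subseteq> I"
    unfolding M_def
  proof (rule lie_subalg_least[OF _ Isub])
    show "Y \<subseteq> I"
    proof
      fix y assume "y \<in> Y"
      then obtain pr where pr: "pr \<in> X \<times> {w. set w \<subseteq> B \<and> length w \<le> N}" "y = (\<lambda>(x,w). act x w) pr"
        unfolding Y_def by (rule imageE)
      obtain x w where "pr = (x, w)" by (cases pr)
      then have "x \<in> X" "y = act x w" using pr by auto
      then show "y \<in> I" using act_ideal[OF ideal] XI by blast
    qed
  qed
  obtain C where C: "C \<subseteq> I \<inter> span B" "independent C" "I \<inter> span B \<subseteq> span C"
    "card C = dim (I \<inter> span B)"
    by (rule basis_exists)
  have "C \<subseteq> span B" using C(1) by blast
  then have Cfin: "finite C" using independent_span_bound[OF Bfin C(2)] by blast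
  define G where "G = Y \<union> C"
  have GI: "G \<subseteq> I" unfolding G_def using MI C(1) lie_subalg_sub[of Y] M_def by blast
  have "lie_subalg scale br G \<subseteq> I" by (rule lie_subalg_least[OF GI Isub])
  moreover have "I \<subseteq> lie_subalg scale br G"
  proof
    fix i assume i: "i \<in> I"
    obtain m q where mq: "i = m + q" "m \<in> M" "q \<in> span B" using inV[of i] unfolding V_def by blast
    have GS: "subspace (lie_subalg scale br G)" using subalg_subspace[OF lie_subalg_subalg] .
    have "q = i - m" using mq by simp
    then have "q \<in> I" using subspace_diff[OF IS i] MI mq(2) by blast
    then have "q \<in> span C" using C(3) mq(3) by blast
    moreover have "span C \<subseteq> lie_subalg scale br G"
      using span_minimal[OF _ GS, of C] lie_subalg_sub[of G] unfolding G_def by blast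
    moreover have "m \<in> lie_subalg scale br G"
      using mq(2) lie_subalg_mono[of Y G] unfolding M_def G_def by blast
    ultimately show "i \<in> lie_subalg scale br G" using mq(1) subspace_add[OF GS] by blast
  qed
  ultimately have "lie_subalg scale br G = I" by blast
  moreover have "finite G" unfolding G_def using Yfin Cfin by blast
  ultimately show ?thesis using GI by blast
qed

end

theorem lemma3:
  fixes scale :: "'f::field \<Rightarrow> 'a::ab_group_add \<Rightarrow> 'a"
    and br :: "'a \<Rightarrow> 'a \<Rightarrow> 'a"
    and A :: "'a set" and I :: "'a set"
  assumes "lie_algebra scale br"
    and "finite A"
    and "lie_subalg scale br A = UNIV"
    and "\<forall>s \<in> lie_set br A. ad_nilpotent br s"
    and "lie_ideal scale br I"
    and "finite_codim scale I"
  shows "\<exists>G. finite G \<and> G \<subseteq> I \<and> lie_subalg scale br G = I"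
  using lie_algebra.final[OF assms] .

end
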